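(* Let $(Q_0,R_0,L_0)$ denote a fixed point of the dynamical system $\frac{dQ}{dt}=\eta\frac{I_1}{Q}-\eta\zeta Q$, $\frac{dR}{dt}=\eta\frac{Q}{L^2}I_3-\eta\frac{R}{L^2}I_1-\eta^2\frac{Q^2R}{2L^4}I_2$, $\frac{dL}{dt}=\eta^2\frac{Q^2}{2L^3}I_2$. Assume the learning rate $\eta$ is sufficiently small when training converges (so that terms of order $\eta^2$ can be neglected) and $\mathbf{x}\sim\mathcal{N}(0,\frac{1}{N}\mathbf{I})$. If the activation function $g$ is ReLU, then $Q_0=\frac{1}{2\zeta+1}$, $R_0=1$, and $L_0$ can be arbitrary.
   Context: Teacher-student setting for a single-layer perceptron trained by online SGD with learning rate $\eta$. The teacher outputs $g(\mathbf{w}^{\ast T}\mathbf{x})$ with $\frac{1}{N}\mathbf{w}^{\ast T}\mathbf{w}^\ast=1$; the student (batch normalization represented as weight normalization plus gamma decay) outputs $g(\tilde{\mathbf{w}}^T\mathbf{x})$ with normalized weight $\tilde{\mathbf{w}}=\sqrt{N}\gamma\frac{\mathbf{w}}{\|\mathbf{w}\|_2}$; the per-sample loss is $[g(\mathbf{w}^{\ast T}\mathbf{x})-g(\tilde{\mathbf{w}}^T\mathbf{x})]^2+\zeta\gamma^2$ with decay coefficient $\zeta$, and teacher and student share the same activation $g$. Order parameters: $Q=\gamma$ (so $\frac1N\tilde{\mathbf w}^T\tilde{\mathbf w}=Q^2$), $R=\frac{1}{N\gamma}\tilde{\mathbf{w}}^T\mathbf{w}^\ast$ (overlap between student and teacher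 directions), $L^2=\frac1N\mathbf{w}^T\mathbf{w}$. With $\delta=g'(\tilde{\mathbf{w}}^T\mathbf{x})[g(\mathbf{w}^{\ast T}\mathbf{x})-g(\tilde{\mathbf{w}}^T\mathbf{x})]$, define $I_1=\mathbb{E}_{\mathbf{x}}[\delta\,\tilde{\mathbf{w}}^T\mathbf{x}]$, $I_2=\mathbb{E}_{\mathbf{x}}[\delta^2\mathbf{x}^T\mathbf{x}]$, $I_3=\mathbb{E}_{\mathbf{x}}[\delta\,\mathbf{w}^{\ast T}\mathbf{x}]$. The dynamical system is obtained in the thermodynamic limit $N\to\infty$ with continuous time $t=j/N$ ($j$ the SGD step). *)

theory Defs
  imports "HOL-Probability.Probability"
begin

(* ReLU activation and its (a.e.) derivative; the value of g' at 0 is irrelevant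
   (a null set for the Gaussian), we take g'(0) = 0. *)
definition relu :: "real \<Rightarrow> real" where
  "relu s = max s 0"

definition relu' :: "real \<Rightarrow> real" where
  "relu' s = (if s > 0 then 1 else 0)"

definition gauss2 :: "(real \<times> real) measure" where
  "gauss2 = density (lborel \<Otimes>\<^sub>M lborel)
             (\<lambda>(z1, z2). ennreal (std_normal_density z1 * std_normal_density z2))"

(* For x ~ N(0, I/N), the pre-activations u = w~^T x (student) and v = w*^T x (teacher)
   are jointly Gaussian, centred, with Var u = Q^2, Cov(u,v) = Q R, Var v = 1.
   They are realised as  v = z1,  u = Q (R z1 + sqrt(1 - R^2) z2)  (|R| \<le> 1). *)
definition stu_pre :: "real \<Rightarrow> real \<Rightarrow> real \<times> real \<Rightarrow> real" where
  "stu_pre Q R z = Q * (R * fst z + sqrt (1 - R\<^sup>2) * snd z)"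

definition tea_pre :: "real \<times> real \<Rightarrow> real" where
  "tea_pre z = fst z"

definition delta :: "(real \<Rightarrow> real) \<Rightarrow> (real \<Rightarrow> real) \<Rightarrow> real \<Rightarrow> real \<Rightarrow> real \<times> real \<Rightarrow> real" where
  "delta g g' Q R z = g' (stu_pre Q R z) * (g (tea_pre z) - g (stu_pre Q R z))"

definition I1 :: "(real \<Rightarrow> real) \<Rightarrow> (real \<Rightarrow> real) \<Rightarrow> real \<Rightarrow> real \<Rightarrow> real" where
  "I1 g g' Q R = (\<integral>z. delta g g' Q R z * stu_pre Q R z \<partial>gauss2)"

definition I3 :: "(real \<Rightarrow> real) \<Rightarrow> (real \<Rightarrow> real) \<Rightarrow> real \<Rightarrow> real \<Rightarrow> real" where
  "I3 g g' Q R = (\<integral>z. delta g g' Q R z * tea_pre z \<partial>gauss2)"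

(* Right-hand sides of the dynamical system with the O(eta^2) terms neglected
   (small learning rate):  dQ/dt = eta I1/Q - eta zeta Q,
   dR/dt = eta Q/L^2 I3 - eta R/L^2 I1,   dL/dt = 0. *)
definition dQ :: "(real \<Rightarrow> real) \<Rightarrow> (real \<Rightarrow> real) \<Rightarrow> real \<Rightarrow> real \<Rightarrow> real \<Rightarrow> real \<Rightarrow> real \<Rightarrow> real" where
  "dQ g g' \<eta> \<zeta> Q R L = \<eta> * I1 g g' Q R / Q - \<eta> * \<zeta> * Q"

definition dR :: "(real \<Rightarrow> real) \<Rightarrow> (real \<Rightarrow> real) \<Rightarrow> real \<Rightarrow> real \<Rightarrow> real \<Rightarrow> real \<Rightarrow> real \<Rightarrow> real" where
  "dR g g' \<eta> \<zeta> Q R L = \<eta> * Q / L\<^sup>2 * I3 g g' Q R - \<eta> * R / L\<^sup>2 * I1 g g' Q R"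

definition dL :: "(real \<Rightarrow> real) \<Rightarrow> (real \<Rightarrow> real) \<Rightarrow> real \<Rightarrow> real \<Rightarrow> real \<Rightarrow> real \<Rightarrow> real \<Rightarrow> real" where
  "dL g g' \<eta> \<zeta> Q R L = 0"

definition is_fixed_point ::
  "(real \<Rightarrow> real) \<Rightarrow> (real \<Rightarrow> real) \<Rightarrow> real \<Rightarrow> real \<Rightarrow> real \<Rightarrow> real \<Rightarrow> real \<Rightarrow> bool" where
  "is_fixed_point g g' \<eta> \<zeta> Q R L \<longleftrightarrow>
     dQ g g' \<eta> \<zeta> Q R L = 0 \<and> dR g g' \<eta> \<zeta> Q R L = 0 \<and> dL g g' \<eta> \<zeta> Q R L = 0"

end

theory Submission
  imports Defs
begin

abbreviation NN :: "real measure" where "NN \<equiv> density lborel (\<lambda>x. ennreal (std_normal_density x))"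

lemma NN_prob: "prob_space NN"
  by (rule prob_space_normal_density) simp

interpretation NN: prob_space NN by (rule NN_prob)
interpretation NN2: pair_prob_space NN NN ..

lemma gauss2_eq: "gauss2 = NN \<Otimes>\<^sub>M NN"
proof -
  have "NN \<Otimes>\<^sub>M NN = density (lborel \<Otimes>\<^sub>M lborel) (\<lambda>(x,y). ennreal (std_normal_density x) * ennreal (std_normal_density y))"
    by (rule pair_measure_density) (auto intro: NN.sigma_finite_measure_axioms sigma_finite_lborel)
  also have "\<dots> = gauss2" unfolding gauss2_def
    by (intro density_cong) (auto simp: ennreal_mult)
  finally show ?thesis by simp
qed


lemma sets_gauss2[measurable_cong]: "sets gauss2 = sets (lborel \<Otimes>\<^sub>M lborel)"
  unfolding gauss2_def by simp

lemma NN_integrable: "integrable lborel (\<lambda>x. std_normal_density x * f x) \<Longrightarrow> f \<in> borel_measurable borel \<Longrightarrow> integrable NN f"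
  by (subst integrable_density) auto

lemma NN_integral: "f \<in> borel_measurable borel \<Longrightarrow> integral\<^sup>L NN f = (\<integral>x. std_normal_density x * f x \<partial>lborel)"
  by (subst integral_density) auto

lemma gauss2_fst_integrable:
  fixes f :: "real \<Rightarrow> real"
  assumes "integrable NN f"
  shows "integrable gauss2 (\<lambda>z. f (fst z))"
proof -
  have "integrable (distr (NN \<Otimes>\<^sub>M NN) NN fst) f" using assms NN.distr_pair_fst[of NN] by simp
  then show ?thesis unfolding gauss2_eq by (rule integrable_distr[rotated]) simp
qed

lemma gauss2_fst_integral:
  fixes f :: "real \<Rightarrow> real"
  assumes "f \<in> borel_measurable borel"
  shows "(\<integral>z. f (fst z) \<partial>gauss2) = integral\<^sup>L NN f"
proof -
  have "integral\<^sup>L NN f = integral\<^sup>L (distr (NN \<Otimes>\<^sub>M NN) NN fst) f" using NN.distr_pair_fst[of NN] by simp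
  also have "\<dots> = (\<integral>z. f (fst z) \<partial>(NN \<Otimes>\<^sub>M NN))" using assms by (subst integral_distr) auto
  finally show ?thesis unfolding gauss2_eq by simp
qed

lemma gauss2_snd_integrable:
  fixes f :: "real \<Rightarrow> real"
  assumes "integrable NN f"
  shows "integrable gauss2 (\<lambda>z. f (snd z))"
proof -
  have "integrable (NN \<Otimes>\<^sub>M NN) (\<lambda>z. f (fst z))" using gauss2_fst_integrable[OF assms] gauss2_eq by simp
  then have "integrable (NN \<Otimes>\<^sub>M NN) (\<lambda>(x,y). (\<lambda>z. f (snd z)) (y,x))" by (simp add: case_prod_beta')
  then show ?thesis unfolding gauss2_eq using NN2.integrable_product_swap_iff by blast
qed

lemma NN_sq: "integrable NN (\<lambda>x. x\<^sup>2)"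
  by (rule NN_integrable) (use integrable_std_normal_moment[of 2] in auto)

lemma gauss2_poly_integrable:
  fixes f :: "real \<times> real \<Rightarrow> real"
  assumes [measurable]: "f \<in> borel_measurable (lborel \<Otimes>\<^sub>M lborel)"
    and b: "\<And>z. \<bar>f z\<bar> \<le> C * ((fst z)\<^sup>2 + (snd z)\<^sup>2)"
  shows "integrable gauss2 f"
proof -
  have i: "integrable gauss2 (\<lambda>z. C * ((fst z)\<^sup>2 + (snd z)\<^sup>2))"
    using gauss2_fst_integrable[OF NN_sq] gauss2_snd_integrable[OF NN_sq] by auto
  show ?thesis
    by (rule Bochner_Integration.integrable_bound[OF i]) (use b in \<open>auto intro!: AE_I2 order_trans[OF _ abs_ge_self]\<close>)
qed


lemma distr_LL_eqI:
  fixes T :: "real \<times> real \<Rightarrow> real \<times> real"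
  assumes T[measurable]: "T \<in> measurable (lborel \<Otimes>\<^sub>M lborel) (lborel \<Otimes>\<^sub>M lborel)"
    and h: "\<And>A. A \<in> sets (lborel \<Otimes>\<^sub>M lborel) \<Longrightarrow>
      (\<integral>\<^sup>+ z. indicator A (T z) \<partial>(lborel \<Otimes>\<^sub>M lborel)) = (\<integral>\<^sup>+ z. indicator A z \<partial>(lborel \<Otimes>\<^sub>M lborel))"
  shows "distr (lborel \<Otimes>\<^sub>M lborel) (lborel \<Otimes>\<^sub>M lborel) T = lborel \<Otimes>\<^sub>M lborel"
proof (rule measure_eqI)
  fix A assume A: "A \<in> sets (distr (lborel \<Otimes>\<^sub>M lborel) (lborel \<Otimes>\<^sub>M lborel) T)"
  then have A': "A \<in> sets (lborel \<Otimes>\<^sub>M lborel)" by simp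
  have "emeasure (distr (lborel \<Otimes>\<^sub>M lborel) (lborel \<Otimes>\<^sub>M lborel) T) A
      = (\<integral>\<^sup>+ z. indicator A z \<partial>(distr (lborel \<Otimes>\<^sub>M lborel) (lborel \<Otimes>\<^sub>M lborel) T))"
    using A by (rule nn_integral_indicator[symmetric])
  also have "\<dots> = (\<integral>\<^sup>+ z. indicator A (T z) \<partial>(lborel \<Otimes>\<^sub>M lborel))"
    using A' by (subst nn_integral_distr) auto
  also have "\<dots> = emeasure (lborel \<Otimes>\<^sub>M lborel) A" using h[OF A'] A' by simp
  finally show "emeasure (distr (lborel \<Otimes>\<^sub>M lborel) (lborel \<Otimes>\<^sub>M lborel) T) A = emeasure (lborel \<Otimes>\<^sub>M lborel) A" .
qed simp

lemma shear1: "distr (lborel \<Otimes>\<^sub>M lborel) (lborel \<Otimes>\<^sub>M lborel) (\<lambda>(x,y). (x + c*y, y::real)) = lborel \<Otimes>\<^sub>M lborel"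
proof (rule distr_LL_eqI)
  fix A :: "(real \<times> real) set" assume A[measurable]: "A \<in> sets (lborel \<Otimes>\<^sub>M lborel)"
  have "(\<integral>\<^sup>+ z. indicator A ((\<lambda>(x,y). (x + c*y, y)) z) \<partial>(lborel \<Otimes>\<^sub>M lborel))
     = (\<integral>\<^sup>+ y. \<integral>\<^sup>+ x. indicator A (x + c*y, y) \<partial>lborel \<partial>lborel)"
    by (subst lborel_pair.nn_integral_snd[symmetric]) auto
  also have "\<dots> = (\<integral>\<^sup>+ y. \<integral>\<^sup>+ x. indicator A (x, y) \<partial>lborel \<partial>lborel)"
  proof (rule nn_integral_cong)
    fix y :: real
    show "(\<integral>\<^sup>+ x. indicator A (x + c*y, y) \<partial>lborel) = (\<integral>\<^sup>+ x. indicator A (x, y) \<partial>lborel)"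
      using nn_integral_real_affine[of "\<lambda>x. indicator A (x, y)" 1 "c*y"] by (simp add: add.commute)
  qed
  also have "\<dots> = (\<integral>\<^sup>+ z. indicator A z \<partial>(lborel \<Otimes>\<^sub>M lborel))"
    by (subst lborel_pair.nn_integral_snd[symmetric]) auto
  finally show "(\<integral>\<^sup>+ z. indicator A ((\<lambda>(x,y). (x + c*y, y)) z) \<partial>(lborel \<Otimes>\<^sub>M lborel)) = (\<integral>\<^sup>+ z. indicator A z \<partial>(lborel \<Otimes>\<^sub>M lborel))" .
qed simp

lemma shear2: "distr (lborel \<Otimes>\<^sub>M lborel) (lborel \<Otimes>\<^sub>M lborel) (\<lambda>(x,y). (x, y + c*x::real)) = lborel \<Otimes>\<^sub>M lborel"
proof (rule distr_LL_eqI)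
  fix A :: "(real \<times> real) set" assume A[measurable]: "A \<in> sets (lborel \<Otimes>\<^sub>M lborel)"
  have "(\<integral>\<^sup>+ z. indicator A ((\<lambda>(x,y). (x, y + c*x)) z) \<partial>(lborel \<Otimes>\<^sub>M lborel))
     = (\<integral>\<^sup>+ x. \<integral>\<^sup>+ y. indicator A (x, y + c*x) \<partial>lborel \<partial>lborel)"
    by (subst lborel.nn_integral_fst[symmetric]) auto
  also have "\<dots> = (\<integral>\<^sup>+ x. \<integral>\<^sup>+ y. indicator A (x, y) \<partial>lborel \<partial>lborel)"
  proof (rule nn_integral_cong)
    fix x :: real
    show "(\<integral>\<^sup>+ y. indicator A (x, y + c*x) \<partial>lborel) = (\<integral>\<^sup>+ y. indicator A (x, y) \<partial>lborel)"
      using nn_integral_real_affine[of "\<lambda>y. indicator A (x, y)" 1 "c*x"] by (simp add: add.commute)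
  qed
  also have "\<dots> = (\<integral>\<^sup>+ z. indicator A z \<partial>(lborel \<Otimes>\<^sub>M lborel))"
    by (subst lborel.nn_integral_fst[symmetric]) auto
  finally show "(\<integral>\<^sup>+ z. indicator A ((\<lambda>(x,y). (x, y + c*x)) z) \<partial>(lborel \<Otimes>\<^sub>M lborel)) = (\<integral>\<^sup>+ z. indicator A z \<partial>(lborel \<Otimes>\<^sub>M lborel))" .
qed simp

lemma flip2: "distr (lborel \<Otimes>\<^sub>M lborel) (lborel \<Otimes>\<^sub>M lborel) (\<lambda>(x::real,y::real). (x, - y)) = lborel \<Otimes>\<^sub>M lborel"
proof (rule distr_LL_eqI)
  fix A :: "(real \<times> real) set" assume A[measurable]: "A \<in> sets (lborel \<Otimes>\<^sub>M lborel)"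
  have "(\<integral>\<^sup>+ z. indicator A ((\<lambda>(x,y). (x, - y)) z) \<partial>(lborel \<Otimes>\<^sub>M lborel))
     = (\<integral>\<^sup>+ x. \<integral>\<^sup>+ y. indicator A (x, - y) \<partial>lborel \<partial>lborel)"
    by (subst lborel.nn_integral_fst[symmetric]) auto
  also have "\<dots> = (\<integral>\<^sup>+ x. \<integral>\<^sup>+ y. indicator A (x, y) \<partial>lborel \<partial>lborel)"
  proof (rule nn_integral_cong)
    fix x :: real
    show "(\<integral>\<^sup>+ y. indicator A (x, - y) \<partial>lborel) = (\<integral>\<^sup>+ y. indicator A (x, y) \<partial>lborel)"
      using nn_integral_real_affine[of "\<lambda>y. indicator A (x, y)" "-1" 0] by simp
  qed
  also have "\<dots> = (\<integral>\<^sup>+ z. indicator A z \<partial>(lborel \<Otimes>\<^sub>M lborel))"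
    by (subst lborel.nn_integral_fst[symmetric]) auto
  finally show "(\<integral>\<^sup>+ z. indicator A ((\<lambda>(x,y). (x, - y)) z) \<partial>(lborel \<Otimes>\<^sub>M lborel)) = (\<integral>\<^sup>+ z. indicator A z \<partial>(lborel \<Otimes>\<^sub>M lborel))" .
qed simp


lemma distr_LL_comp:
  fixes T1 T2 :: "real \<times> real \<Rightarrow> real \<times> real"
  assumes [measurable]: "T1 \<in> measurable (lborel \<Otimes>\<^sub>M lborel) (lborel \<Otimes>\<^sub>M lborel)"
    "T2 \<in> measurable (lborel \<Otimes>\<^sub>M lborel) (lborel \<Otimes>\<^sub>M lborel)"
    and h1: "distr (lborel \<Otimes>\<^sub>M lborel) (lborel \<Otimes>\<^sub>M lborel) T1 = lborel \<Otimes>\<^sub>M lborel"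
    and h2: "distr (lborel \<Otimes>\<^sub>M lborel) (lborel \<Otimes>\<^sub>M lborel) T2 = lborel \<Otimes>\<^sub>M lborel"
  shows "distr (lborel \<Otimes>\<^sub>M lborel) (lborel \<Otimes>\<^sub>M lborel) (T1 \<circ> T2) = lborel \<Otimes>\<^sub>M lborel"
proof -
  have "distr (lborel \<Otimes>\<^sub>M lborel) (lborel \<Otimes>\<^sub>M lborel) (T1 \<circ> T2)
     = distr (distr (lborel \<Otimes>\<^sub>M lborel) (lborel \<Otimes>\<^sub>M lborel) T2) (lborel \<Otimes>\<^sub>M lborel) T1"
    by (subst distr_distr) auto
  then show ?thesis using h1 h2 by simp
qed

definition Phi :: "real \<Rightarrow> real \<times> real \<Rightarrow> real \<times> real" where
  "Phi R z = (R * fst z + sqrt (1 - R\<^sup>2) * snd z, sqrt (1 - R\<^sup>2) * fst z - R * snd z)"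

lemma Phi_measurable[measurable]: "Phi R \<in> measurable (lborel \<Otimes>\<^sub>M lborel) (lborel \<Otimes>\<^sub>M lborel)"
  unfolding Phi_def by measurable

lemma Phi_LL:
  assumes "-1 < R" "R < 1"
  shows "distr (lborel \<Otimes>\<^sub>M lborel) (lborel \<Otimes>\<^sub>M lborel) (Phi R) = lborel \<Otimes>\<^sub>M lborel"
proof -
  define s where "s = sqrt (1 - R\<^sup>2)"
  define t where "t = s / (1 + R)"
  have s2: "s\<^sup>2 = 1 - R\<^sup>2" unfolding s_def using assms by (simp add: abs_square_le_1)
  have R1: "1 + R \<noteq> 0" using assms by simp
  have ts: "t * s = 1 - R" unfolding t_def using s2 R1
    by (simp add: field_simps power2_eq_square)
  have eq: "Phi R = (\<lambda>(x,y). (x + (-t)*y, y)) \<circ> ((\<lambda>(x,y). (x, y + s*x)) \<circ> ((\<lambda>(x,y). (x + (-t)*y, y)) \<circ> (\<lambda>(x::real,y::real). (x, - y))))"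
  proof
    fix z :: "real \<times> real"
    obtain a b where z: "z = (a, b)" by (cases z)
    have e1: "a + t * b - t * (s * a + s * t * b - b) = R * a + s * b"
    proof -
      have "a + t * b - t * (s * a + s * t * b - b) = a * (1 - t * s) + b * t * (2 - t * s)" by (simp add: algebra_simps)
      also have "\<dots> = a * R + b * (t * (1 + R))" unfolding ts by (simp add: algebra_simps)
      also have "t * (1 + R) = s" unfolding t_def using R1 by simp
      finally show ?thesis by (simp add: algebra_simps)
    qed
    have st: "s * t = 1 - R" using ts by (simp add: mult.commute)
    have e2: "s * a + s * t * b - b = s * a - R * b" by (simp add: algebra_simps st)
    show "Phi R z = ((\<lambda>(x,y). (x + (-t)*y, y)) \<circ> ((\<lambda>(x,y). (x, y + s*x)) \<circ> ((\<lambda>(x,y). (x + (-t)*y, y)) \<circ> (\<lambda>(x::real,y::real). (x, - y))))) z"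
      using e1 e2 unfolding z Phi_def s_def[symmetric] by (simp add: algebra_simps)
  qed
  show ?thesis unfolding eq
    by (intro distr_LL_comp shear1[of "-t"] shear2 flip2) (auto)
qed


lemma gauss2_inv:
  fixes T :: "real \<times> real \<Rightarrow> real \<times> real"
  assumes T[measurable]: "T \<in> measurable (lborel \<Otimes>\<^sub>M lborel) (lborel \<Otimes>\<^sub>M lborel)"
    and h: "distr (lborel \<Otimes>\<^sub>M lborel) (lborel \<Otimes>\<^sub>M lborel) T = lborel \<Otimes>\<^sub>M lborel"
    and r: "\<And>a b. std_normal_density (fst (T (a,b))) * std_normal_density (snd (T (a,b)))
                 = std_normal_density a * std_normal_density b"
  shows "distr gauss2 (lborel \<Otimes>\<^sub>M lborel) T = gauss2"
proof (rule measure_eqI)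
  let ?r = "\<lambda>z::real\<times>real. ennreal (std_normal_density (fst z) * std_normal_density (snd z))"
  have g: "gauss2 = density (lborel \<Otimes>\<^sub>M lborel) ?r" unfolding gauss2_def
    by (intro density_cong) (auto simp: case_prod_beta)
  have T'[measurable]: "T \<in> measurable gauss2 (lborel \<Otimes>\<^sub>M lborel)"
    using T by (simp add: measurable_cong_sets[OF sets_gauss2 refl])
  have rr: "\<And>z. ?r (T z) = ?r z" using r by (metis prod.collapse)
  fix A assume A: "A \<in> sets (distr gauss2 (lborel \<Otimes>\<^sub>M lborel) T)"
  then have A'[measurable]: "A \<in> sets (lborel \<Otimes>\<^sub>M lborel)" by simp
  have "emeasure (distr gauss2 (lborel \<Otimes>\<^sub>M lborel) T) A
      = (\<integral>\<^sup>+ z. indicator A z \<partial>(distr gauss2 (lborel \<Otimes>\<^sub>M lborel) T))"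
    using A by (rule nn_integral_indicator[symmetric])
  also have "\<dots> = (\<integral>\<^sup>+ z. indicator A (T z) \<partial>gauss2)"
    by (subst nn_integral_distr) auto
  also have "\<dots> = (\<integral>\<^sup>+ z. ?r z * indicator A (T z) \<partial>(lborel \<Otimes>\<^sub>M lborel))"
    unfolding g by (subst nn_integral_density) auto
  also have "\<dots> = (\<integral>\<^sup>+ z. ?r (T z) * indicator A (T z) \<partial>(lborel \<Otimes>\<^sub>M lborel))"
    using rr by simp
  also have "\<dots> = (\<integral>\<^sup>+ z. ?r z * indicator A z \<partial>(distr (lborel \<Otimes>\<^sub>M lborel) (lborel \<Otimes>\<^sub>M lborel) T))"
    by (subst nn_integral_distr) auto
  also have "\<dots> = (\<integral>\<^sup>+ z. ?r z * indicator A z \<partial>(lborel \<Otimes>\<^sub>M lborel))"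
    using h by simp
  also have "\<dots> = emeasure gauss2 A"
    unfolding g by (subst emeasure_density[OF _ A']) auto
  finally show "emeasure (distr gauss2 (lborel \<Otimes>\<^sub>M lborel) T) A = emeasure gauss2 A" .
qed (simp add: sets_gauss2)

lemma std_normal_prod: "std_normal_density a * std_normal_density b = exp (- (a\<^sup>2 + b\<^sup>2) / 2) / (2 * pi)"
  unfolding std_normal_density_def
  by (simp add: exp_add[symmetric] field_simps real_sqrt_mult[symmetric] add_divide_distrib)

lemma gauss2_Phi:
  assumes "-1 < R" "R < 1"
  shows "distr gauss2 (lborel \<Otimes>\<^sub>M lborel) (Phi R) = gauss2"
proof (rule gauss2_inv[OF Phi_measurable Phi_LL[OF assms]])
  fix a b :: real
  define s where "s = sqrt (1 - R\<^sup>2)"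
  have s2: "s\<^sup>2 = 1 - R\<^sup>2" unfolding s_def using assms by (simp add: abs_square_le_1)
  have "(R * a + s * b)\<^sup>2 + (s * a - R * b)\<^sup>2 = (R\<^sup>2 + s\<^sup>2) * (a\<^sup>2 + b\<^sup>2)"
    by (simp add: power2_eq_square algebra_simps)
  also have "\<dots> = a\<^sup>2 + b\<^sup>2" using s2 by simp
  finally have e: "(R * a + s * b)\<^sup>2 + (s * a - R * b)\<^sup>2 = a\<^sup>2 + b\<^sup>2" .
  show "std_normal_density (fst (Phi R (a, b))) * std_normal_density (snd (Phi R (a, b))) =
        std_normal_density a * std_normal_density b"
    unfolding std_normal_prod Phi_def s_def[symmetric] using e by simp
qed

lemma flip_measurable[measurable]: "(\<lambda>(x::real,y::real). (x, - y)) \<in> measurable (lborel \<Otimes>\<^sub>M lborel) (lborel \<Otimes>\<^sub>M lborel)"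
  by measurable

lemma gauss2_flip: "distr gauss2 (lborel \<Otimes>\<^sub>M lborel) (\<lambda>(x::real,y::real). (x, - y)) = gauss2"
  by (rule gauss2_inv[OF flip_measurable flip2]) (simp add: std_normal_prod)


lemma delta_meas[measurable]: "delta relu relu' Q R \<in> borel_measurable (lborel \<Otimes>\<^sub>M lborel)"
  unfolding delta_def relu_def relu'_def stu_pre_def tea_pre_def by measurable

lemma stu_meas[measurable]: "stu_pre Q R \<in> borel_measurable (lborel \<Otimes>\<^sub>M lborel)"
  unfolding stu_pre_def by measurable

lemma tea_meas[measurable]: "tea_pre \<in> borel_measurable (lborel \<Otimes>\<^sub>M lborel)"
  unfolding tea_pre_def by measurable

lemma relu_lip: "\<bar>relu x - relu y\<bar> \<le> \<bar>x - y\<bar>"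
  unfolding relu_def by auto

lemma relu'_bd: "\<bar>relu' x\<bar> \<le> 1" "relu' x \<ge> 0"
  unfolding relu'_def by auto

lemma sqrt_bd: assumes "-1 \<le> R" "R \<le> 1" shows "\<bar>sqrt (1 - R\<^sup>2)\<bar> \<le> 1" "\<bar>R\<bar> \<le> 1"
proof -
  have "R\<^sup>2 \<le> 1" using assms by (simp add: abs_square_le_1)
  then have "0 \<le> 1 - R\<^sup>2" "1 - R\<^sup>2 \<le> 1" by auto
  then show "\<bar>sqrt (1 - R\<^sup>2)\<bar> \<le> 1" by simp
  show "\<bar>R\<bar> \<le> 1" using assms by simp
qed

lemma stu_bd:
  assumes "-1 \<le> R" "R \<le> 1" "Q > 0"
  shows "\<bar>stu_pre Q R z\<bar> \<le> Q * (\<bar>fst z\<bar> + \<bar>snd z\<bar>)"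
proof -
  have "\<bar>R * fst z + sqrt (1 - R\<^sup>2) * snd z\<bar> \<le> \<bar>R\<bar> * \<bar>fst z\<bar> + \<bar>sqrt (1 - R\<^sup>2)\<bar> * \<bar>snd z\<bar>"
    by (metis abs_mult abs_triangle_ineq)
  also have "\<dots> \<le> 1 * \<bar>fst z\<bar> + 1 * \<bar>snd z\<bar>"
    using sqrt_bd[OF assms(1,2)] by (intro add_mono mult_right_mono) auto
  finally show ?thesis unfolding stu_pre_def using assms(3) by (simp add: abs_mult)
qed

lemma delta_bd:
  assumes "-1 \<le> R" "R \<le> 1" "Q > 0"
  shows "\<bar>delta relu relu' Q R z\<bar> \<le> (1 + Q) * (\<bar>fst z\<bar> + \<bar>snd z\<bar>)"
proof -
  have "\<bar>delta relu relu' Q R z\<bar> \<le> 1 * \<bar>relu (tea_pre z) - relu (stu_pre Q R z)\<bar>"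
    unfolding delta_def abs_mult by (intro mult_right_mono relu'_bd) auto
  also have "\<dots> \<le> \<bar>tea_pre z\<bar> + \<bar>stu_pre Q R z\<bar>" using relu_lip[of "tea_pre z" "stu_pre Q R z"] by simp
  also have "\<dots> \<le> (\<bar>fst z\<bar> + \<bar>snd z\<bar>) + Q * (\<bar>fst z\<bar> + \<bar>snd z\<bar>)"
    using stu_bd[OF assms, of z] unfolding tea_pre_def by simp
  finally show ?thesis by (simp add: algebra_simps)
qed

lemma sq_sum_bd: "(\<bar>a\<bar> + \<bar>b::real\<bar>)\<^sup>2 \<le> 2 * (a\<^sup>2 + b\<^sup>2)"
proof -
  have "0 \<le> (\<bar>a\<bar> - \<bar>b\<bar>)\<^sup>2" by simp
  then show ?thesis by (simp add: power2_eq_square algebra_simps)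
qed

lemma gauss2_int2:
  fixes f :: "real \<times> real \<Rightarrow> real"
  assumes [measurable]: "f \<in> borel_measurable (lborel \<Otimes>\<^sub>M lborel)"
    and C: "C \<ge> 0" and b: "\<And>z. \<bar>f z\<bar> \<le> C * (\<bar>fst z\<bar> + \<bar>snd z\<bar>)\<^sup>2"
  shows "integrable gauss2 f"
proof (rule gauss2_poly_integrable[where C="2*C"])
  fix z :: "real \<times> real"
  show "\<bar>f z\<bar> \<le> 2 * C * ((fst z)\<^sup>2 + (snd z)\<^sup>2)"
    using b[of z] mult_left_mono[OF sq_sum_bd[of "fst z" "snd z"] C] by (simp add: algebra_simps)
qed simp

lemma int_delta_stu:
  assumes "-1 \<le> R" "R \<le> 1" "Q > 0"
  shows "integrable gauss2 (\<lambda>z. delta relu relu' Q R z * stu_pre Q R z)"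
proof (rule gauss2_int2[where C="(1+Q)*Q"])
  fix z :: "real \<times> real"
  have "\<bar>delta relu relu' Q R z * stu_pre Q R z\<bar> \<le> ((1 + Q) * (\<bar>fst z\<bar> + \<bar>snd z\<bar>)) * (Q * (\<bar>fst z\<bar> + \<bar>snd z\<bar>))"
    unfolding abs_mult by (intro mult_mono delta_bd stu_bd assms) (use assms in auto)
  then show "\<bar>delta relu relu' Q R z * stu_pre Q R z\<bar> \<le> (1 + Q) * Q * (\<bar>fst z\<bar> + \<bar>snd z\<bar>)\<^sup>2"
    by (simp add: power2_eq_square algebra_simps)
qed (use assms in auto)

lemma int_delta_tea:
  assumes "-1 \<le> R" "R \<le> 1" "Q > 0"
  shows "integrable gauss2 (\<lambda>z. delta relu relu' Q R z * tea_pre z)"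
proof (rule gauss2_int2[where C="(1+Q)"])
  fix z :: "real \<times> real"
  have "\<bar>delta relu relu' Q R z * tea_pre z\<bar> \<le> ((1 + Q) * (\<bar>fst z\<bar> + \<bar>snd z\<bar>)) * (\<bar>fst z\<bar> + \<bar>snd z\<bar>)"
    unfolding abs_mult tea_pre_def by (intro mult_mono delta_bd assms) (use assms in auto)
  then show "\<bar>delta relu relu' Q R z * tea_pre z\<bar> \<le> (1 + Q) * (\<bar>fst z\<bar> + \<bar>snd z\<bar>)\<^sup>2"
    by (simp add: power2_eq_square algebra_simps)
qed (use assms in auto)


lemma half_moments:
  "(\<integral>x. std_normal_density x * (if x > 0 then x\<^sup>2 else 0) \<partial>lborel) = 1/2"
  "(\<integral>x. std_normal_density x * (if x < 0 then x\<^sup>2 else 0) \<partial>lborel) = 1/2"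
proof -
  let ?p = "\<lambda>x. std_normal_density x * (if x > 0 then x\<^sup>2 else 0)"
  let ?n = "\<lambda>x. std_normal_density x * (if x < 0 then x\<^sup>2 else 0)"
  have m: "integrable lborel (\<lambda>x. std_normal_density x * x ^ 2)"
    using integrable_std_normal_moment[of 2] by simp
  have ip: "integrable lborel ?p"
    by (rule Bochner_Integration.integrable_bound[OF m]) (auto intro!: AE_I2 simp: abs_mult)
  have iN: "integrable lborel ?n"
    by (rule Bochner_Integration.integrable_bound[OF m]) (auto intro!: AE_I2 simp: abs_mult)
  have sym: "(\<integral>x. ?n x \<partial>lborel) = (\<integral>x. ?p x \<partial>lborel)"
  proof -
    have "(\<integral>x. ?n x \<partial>lborel) = \<bar>-1\<bar> *\<^sub>R (\<integral>x. ?n (0 + (-1) * x) \<partial>lborel)"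
      by (rule lborel_integral_real_affine) simp
    also have "\<dots> = (\<integral>x. ?p x \<partial>lborel)"
      by (simp, intro Bochner_Integration.integral_cong) (auto simp: std_normal_density_def)
    finally show ?thesis .
  qed
  have "(\<integral>x. ?p x \<partial>lborel) + (\<integral>x. ?n x \<partial>lborel) = (\<integral>x. ?p x + ?n x \<partial>lborel)"
    using ip iN by simp
  also have "\<dots> = (\<integral>x. std_normal_density x * x ^ (2 * 1) \<partial>lborel)"
    by (intro Bochner_Integration.integral_cong) (auto simp: algebra_simps power2_eq_square)
  also have "\<dots> = 1" by (subst integral_std_normal_moment_even) simp
  finally show "(\<integral>x. ?p x \<partial>lborel) = 1/2" "(\<integral>x. ?n x \<partial>lborel) = 1/2" using sym by simp_all
qed

lemma gauss2_half_pos: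
  "(\<integral>z. (if fst z > 0 then (fst z)\<^sup>2 else 0) \<partial>gauss2) = 1/2"
proof -
  have "(\<integral>z. (if fst z > 0 then (fst z)\<^sup>2 else 0) \<partial>gauss2) = integral\<^sup>L NN (\<lambda>x. if x > 0 then x\<^sup>2 else 0)"
    by (rule gauss2_fst_integral) simp
  also have "\<dots> = (\<integral>x. std_normal_density x * (if x > 0 then x\<^sup>2 else 0) \<partial>lborel)"
    by (rule NN_integral) simp
  finally show ?thesis using half_moments(1) by simp
qed

lemma gauss2_half_neg:
  "(\<integral>z. (if fst z < 0 then (fst z)\<^sup>2 else 0) \<partial>gauss2) = 1/2"
proof -
  have "(\<integral>z. (if fst z < 0 then (fst z)\<^sup>2 else 0) \<partial>gauss2) = integral\<^sup>L NN (\<lambda>x. if x < 0 then x\<^sup>2 else 0)"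
    by (rule gauss2_fst_integral) simp
  also have "\<dots> = (\<integral>x. std_normal_density x * (if x < 0 then x\<^sup>2 else 0) \<partial>lborel)"
    by (rule NN_integral) simp
  finally show ?thesis using half_moments(2) by simp
qed


lemma NN_Ioo_pos:
  fixes l h :: real assumes "l < h" shows "emeasure NN {l<..<h} \<noteq> 0"
proof
  assume "emeasure NN {l<..<h} = 0"
  then have "(\<integral>\<^sup>+ x. ennreal (std_normal_density x) * indicator {l<..<h} x \<partial>lborel) = 0"
    by (subst (asm) emeasure_density) auto
  then have "AE x in lborel. ennreal (std_normal_density x) * indicator {l<..<h} x = 0"
    by (subst (asm) nn_integral_0_iff_AE) auto
  then have "AE x in lborel. x \<notin> {l<..<h}"
    by eventually_elim (auto simp: std_normal_density_def split: split_indicator)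
  then have "emeasure lborel {l<..<h} = 0"
    by (subst (asm) AE_iff_measurable[where N="{l<..<h}"]) auto
  then show False using assms by simp
qed

lemma gauss2_box_pos:
  fixes a b c d :: real assumes "a < b" "c < d"
  shows "emeasure gauss2 ({a<..<b} \<times> {c<..<d}) \<noteq> 0"
proof -
  have "emeasure gauss2 ({a<..<b} \<times> {c<..<d}) = emeasure NN {a<..<b} * emeasure NN {c<..<d}"
    unfolding gauss2_eq by (rule NN.emeasure_pair_measure_Times) auto
  then show ?thesis using NN_Ioo_pos[OF assms(1)] NN_Ioo_pos[OF assms(2)] by simp
qed

lemma gauss2_integral_pos:
  fixes G :: "real \<times> real \<Rightarrow> real"
  assumes G[measurable]: "integrable gauss2 G" and nn: "\<And>z. G z \<ge> 0"
    and ab: "a < b" "c < d" and pos: "\<And>z. z \<in> {a<..<b} \<times> {c<..<d} \<Longrightarrow> G z > 0"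
  shows "integral\<^sup>L gauss2 G > 0"
proof -
  have "integral\<^sup>L gauss2 G \<ge> 0" using nn by (simp add: Bochner_Integration.integral_nonneg)
  moreover have "integral\<^sup>L gauss2 G \<noteq> 0"
  proof
    assume "integral\<^sup>L gauss2 G = 0"
    then have "AE z in gauss2. G z = 0"
      using integral_nonneg_eq_0_iff_AE[OF G] nn by simp
    then have "AE z in gauss2. z \<notin> {a<..<b} \<times> {c<..<d}"
      by eventually_elim (use pos in force)
    then have "emeasure gauss2 ({a<..<b} \<times> {c<..<d}) = 0"
      by (subst (asm) AE_iff_measurable[where N="{a<..<b} \<times> {c<..<d}"])
         (auto simp: sets_gauss2 space_pair_measure gauss2_def)
    then show False using gauss2_box_pos[OF ab] by simp
  qed
  ultimately show ?thesis by simp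
qed


lemma main_pos:
  assumes R: "-1 < R" "R < 1" and Q: "Q > 0"
  shows "Q * I3 relu relu' Q R - R * I1 relu relu' Q R > 0"
proof -
  define s where "s = sqrt (1 - R\<^sup>2)"
  have R2: "R\<^sup>2 < 1" using R by (simp add: abs_square_less_1)
  have s2: "s\<^sup>2 = 1 - R\<^sup>2" unfolding s_def using R2 by simp
  have s0: "s > 0" unfolding s_def using R2 by simp
  have s1: "s \<le> 1" unfolding s_def using R2 by simp
  define H where "H z = delta relu relu' Q R z * (s * fst z - R * snd z)" for z
  define K where "K z = H (Phi R z)" for z
  define F where "F z = K ((\<lambda>(x::real,y::real). (x, - y)) z)" for z
  have Hm[measurable]: "H \<in> borel_measurable (lborel \<Otimes>\<^sub>M lborel)" unfolding H_def by measurable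
  have Km[measurable]: "K \<in> borel_measurable (lborel \<Otimes>\<^sub>M lborel)" unfolding K_def by measurable
  have Fm[measurable]: "F \<in> borel_measurable (lborel \<Otimes>\<^sub>M lborel)" unfolding F_def by measurable
  have PhiG[measurable]: "Phi R \<in> measurable gauss2 (lborel \<Otimes>\<^sub>M lborel)"
    by (simp add: measurable_cong_sets[OF sets_gauss2 refl])
  have flipG[measurable]: "(\<lambda>(x::real,y::real). (x, - y)) \<in> measurable gauss2 (lborel \<Otimes>\<^sub>M lborel)"
    by (simp add: measurable_cong_sets[OF sets_gauss2 refl])
  have iH: "integrable gauss2 H"
  proof (rule gauss2_int2[where C="1+Q"])
    fix z :: "real \<times> real"
    have "\<bar>s * fst z - R * snd z\<bar> \<le> \<bar>s\<bar> * \<bar>fst z\<bar> + \<bar>R\<bar> * \<bar>snd z\<bar>"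
      by (metis abs_mult abs_triangle_ineq4)
    also have "\<dots> \<le> 1 * \<bar>fst z\<bar> + 1 * \<bar>snd z\<bar>"
      using s0 s1 R by (intro add_mono mult_right_mono) auto
    finally have b: "\<bar>s * fst z - R * snd z\<bar> \<le> \<bar>fst z\<bar> + \<bar>snd z\<bar>" by simp
    have "\<bar>H z\<bar> \<le> ((1 + Q) * (\<bar>fst z\<bar> + \<bar>snd z\<bar>)) * (\<bar>fst z\<bar> + \<bar>snd z\<bar>)"
      unfolding H_def abs_mult using R Q by (intro mult_mono delta_bd b) auto
    then show "\<bar>H z\<bar> \<le> (1 + Q) * (\<bar>fst z\<bar> + \<bar>snd z\<bar>)\<^sup>2" by (simp add: power2_eq_square algebra_simps)
  qed (use Q in auto)
  have iK: "integrable gauss2 K"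
    using iH integrable_distr_eq[OF PhiG Hm] gauss2_Phi[OF R] unfolding K_def by simp
  have iF: "integrable gauss2 F"
    using iK integrable_distr_eq[OF flipG Km] gauss2_flip unfolding F_def by simp
  have HK: "integral\<^sup>L gauss2 H = integral\<^sup>L gauss2 K"
    using integral_distr[OF PhiG Hm] gauss2_Phi[OF R] unfolding K_def by simp
  have KF: "integral\<^sup>L gauss2 K = integral\<^sup>L gauss2 F"
    using integral_distr[OF flipG Km] gauss2_flip unfolding F_def by simp
  have step1: "Q * I3 relu relu' Q R - R * I1 relu relu' Q R = Q * s * integral\<^sup>L gauss2 H"
  proof -
    have "Q * I3 relu relu' Q R - R * I1 relu relu' Q R
        = (\<integral>z. Q * (delta relu relu' Q R z * tea_pre z) - R * (delta relu relu' Q R z * stu_pre Q R z) \<partial>gauss2)"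
      unfolding I1_def I3_def
      using int_delta_tea[of R Q] int_delta_stu[of R Q] R Q by simp
    also have "\<dots> = (\<integral>z. Q * s * H z \<partial>gauss2)"
    proof (intro Bochner_Integration.integral_cong refl)
      fix z :: "real \<times> real"
      have "Q * tea_pre z - R * stu_pre Q R z = Q * ((1 - R\<^sup>2) * fst z - R * s * snd z)"
        unfolding tea_pre_def stu_pre_def s_def[symmetric] by (simp add: algebra_simps power2_eq_square)
      also have "\<dots> = Q * s * (s * fst z - R * snd z)" unfolding s2[symmetric] by (simp add: algebra_simps power2_eq_square)
      finally have e: "Q * tea_pre z - R * stu_pre Q R z = Q * s * (s * fst z - R * snd z)" .
      have X: "Q * (delta relu relu' Q R z * tea_pre z) - R * (delta relu relu' Q R z * stu_pre Q R z)
             = delta relu relu' Q R z * (Q * tea_pre z - R * stu_pre Q R z)" by (simp add: algebra_simps)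
      show "Q * (delta relu relu' Q R z * tea_pre z) - R * (delta relu relu' Q R z * stu_pre Q R z) = Q * s * H z"
        unfolding X e H_def by (simp add: algebra_simps)
    qed
    also have "\<dots> = Q * s * integral\<^sup>L gauss2 H" by simp
    finally show ?thesis .
  qed
  define G where "G z = K z + F z" for z
  have G_eq: "G (a, b) = relu' (Q * a) * b * (relu (R * a + s * b) - relu (R * a - s * b))" for a b
  proof -
    have P1: "Phi R (a, b) = (R * a + s * b, s * a - R * b)" unfolding Phi_def s_def by simp
    have P2: "Phi R (a, - b) = (R * a - s * b, s * a + R * b)" unfolding Phi_def s_def by simp
    have u1: "stu_pre Q R (R * a + s * b, s * a - R * b) = Q * a"
    proof -
      have "R * (R * a + s * b) + s * (s * a - R * b) = (R\<^sup>2 + s\<^sup>2) * a" by (simp add: algebra_simps power2_eq_square)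
      then show ?thesis unfolding stu_pre_def s_def[symmetric] using s2 by simp
    qed
    have u2: "stu_pre Q R (R * a - s * b, s * a + R * b) = Q * a"
    proof -
      have "R * (R * a - s * b) + s * (s * a + R * b) = (R\<^sup>2 + s\<^sup>2) * a" by (simp add: algebra_simps power2_eq_square)
      then show ?thesis unfolding stu_pre_def s_def[symmetric] using s2 by simp
    qed
    have w1: "s * (R * a + s * b) - R * (s * a - R * b) = b"
    proof -
      have "s * (R * a + s * b) - R * (s * a - R * b) = (R\<^sup>2 + s\<^sup>2) * b" by (simp add: algebra_simps power2_eq_square)
      then show ?thesis using s2 by simp
    qed
    have w2: "s * (R * a - s * b) - R * (s * a + R * b) = - b"
    proof -
      have "s * (R * a - s * b) - R * (s * a + R * b) = - ((R\<^sup>2 + s\<^sup>2) * b)" by (simp add: algebra_simps power2_eq_square)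
      then show ?thesis using s2 by simp
    qed
    show ?thesis
      unfolding G_def F_def K_def H_def P1 case_prod_conv P2 delta_def u1 u2 w1 w2 tea_pre_def fst_conv snd_conv
      by (simp add: algebra_simps)
  qed
  have iG: "integrable gauss2 G" unfolding G_def using iK iF by simp
  have G_nn: "G z \<ge> 0" for z
  proof -
    obtain a b where z: "z = (a, b)" by (cases z)
    have mono: "b * (relu (R * a + s * b) - relu (R * a - s * b)) \<ge> 0"
    proof (cases "b \<ge> 0")
      case True
      then have "R * a - s * b \<le> R * a + s * b" using s0 by simp
      then have "relu (R * a - s * b) \<le> relu (R * a + s * b)" unfolding relu_def by simp
      then show ?thesis using True by simp
    next
      case False
      then have "R * a + s * b \<le> R * a - s * b" using s0 mult_pos_neg[of s b] by simp
      then have "relu (R * a + s * b) \<le> relu (R * a - s * b)" unfolding relu_def by simp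
      then show ?thesis using False by (simp add: mult_nonpos_nonpos)
    qed
    show ?thesis unfolding z G_eq using mono relu'_bd(2)[of "Q * a"] by (simp add: mult.assoc)
  qed
  have G_pos: "G z > 0" if "z \<in> {0<..<1} \<times> {1/s<..<1/s + 1}" for z
  proof -
    obtain a b where z: "z = (a, b)" by (cases z)
    have a: "0 < a" "a < 1" and b: "1/s < b" using that z by auto
    have sb: "s * b > 1" using b s0 by (simp add: field_simps)
    have Ra: "\<bar>R * a\<bar> < 1"
    proof -
      have "\<bar>R\<bar> * a \<le> 1 * a" using a R by (intro mult_right_mono) auto
      moreover have "\<bar>R * a\<bar> = \<bar>R\<bar> * a" using a by (simp add: abs_mult)
      ultimately show ?thesis using a by linarith
    qed
    have b0: "b > 0" using b s0 by (smt (verit) divide_pos_pos)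
    have "relu' (Q * a) = 1" using a Q unfolding relu'_def by simp
    moreover have "relu (R * a + s * b) = R * a + s * b" "R * a + s * b > 0" using Ra sb unfolding relu_def by auto
    moreover have "relu (R * a - s * b) = 0" using Ra sb unfolding relu_def by auto
    ultimately show ?thesis unfolding z G_eq using b0 by simp
  qed
  have "integral\<^sup>L gauss2 G > 0"
    by (rule gauss2_integral_pos[OF iG G_nn _ _ G_pos]) (use s0 in auto)
  moreover have "integral\<^sup>L gauss2 G = 2 * integral\<^sup>L gauss2 H"
    unfolding G_def using iK iF HK KF by simp
  ultimately have "integral\<^sup>L gauss2 H > 0" by simp
  then show ?thesis unfolding step1 using Q s0 by simp
qed


lemma I1_R1: assumes Q: "Q > 0" shows "I1 relu relu' Q 1 = Q * (1 - Q) / 2"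
proof -
  have "I1 relu relu' Q 1 = (\<integral>z. Q * (1 - Q) * (if fst z > 0 then (fst z)\<^sup>2 else 0) \<partial>gauss2)"
    unfolding I1_def
  proof (intro Bochner_Integration.integral_cong refl)
    fix z :: "real \<times> real"
    show "delta relu relu' Q 1 z * stu_pre Q 1 z = Q * (1 - Q) * (if fst z > 0 then (fst z)\<^sup>2 else 0)"
      using Q unfolding delta_def stu_pre_def tea_pre_def relu_def relu'_def
      by (auto simp: power2_eq_square algebra_simps zero_less_mult_iff mult_le_0_iff max_def)
  qed
  also have "\<dots> = Q * (1 - Q) / 2" using gauss2_half_pos by simp
  finally show ?thesis .
qed

lemma I1_I3_R1: "I1 relu relu' Q 1 = Q * I3 relu relu' Q 1"
proof -
  have "I1 relu relu' Q 1 = (\<integral>z. Q * (delta relu relu' Q 1 z * tea_pre z) \<partial>gauss2)"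
    unfolding I1_def by (intro Bochner_Integration.integral_cong refl) (simp add: stu_pre_def tea_pre_def)
  then show ?thesis unfolding I3_def by simp
qed

lemma I1_Rm1: assumes Q: "Q > 0" shows "I1 relu relu' Q (-1) = - (Q\<^sup>2 / 2)"
proof -
  have "I1 relu relu' Q (-1) = (\<integral>z. - (Q\<^sup>2) * (if fst z < 0 then (fst z)\<^sup>2 else 0) \<partial>gauss2)"
    unfolding I1_def
  proof (intro Bochner_Integration.integral_cong refl)
    fix z :: "real \<times> real"
    show "delta relu relu' Q (-1) z * stu_pre Q (-1) z = - (Q\<^sup>2) * (if fst z < 0 then (fst z)\<^sup>2 else 0)"
      using Q unfolding delta_def stu_pre_def tea_pre_def relu_def relu'_def
      by (auto simp: power2_eq_square algebra_simps zero_less_mult_iff mult_le_0_iff mult_less_0_iff zero_le_mult_iff max_def)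
  qed
  also have "\<dots> = - (Q\<^sup>2 / 2)" using gauss2_half_neg by simp
  finally show ?thesis .
qed

theorem proposition1:
  fixes \<eta> \<zeta> Q R L :: real
  assumes "\<eta> > 0" and "\<zeta> \<ge> 0"
    and "Q > 0" and "-1 \<le> R" and "R \<le> 1" and "L > 0"
  shows "is_fixed_point relu relu' \<eta> \<zeta> Q R L \<longleftrightarrow> (Q = 1 / (2 * \<zeta> + 1) \<and> R = 1)"
proof -
  note eta = assms(1) and zeta = assms(2) and Q = assms(3) and L = assms(6)
  consider "R = 1" | "R = -1" | "-1 < R \<and> R < 1" using assms(4,5) by linarith
  then show ?thesis
  proof cases
    case 1
    have dR0: "dR relu relu' \<eta> \<zeta> Q R L = 0"
      unfolding dR_def 1 I1_I3_R1 by simp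
    have "dQ relu relu' \<eta> \<zeta> Q R L = \<eta> * ((1 - Q) / 2 - \<zeta> * Q)"
      unfolding dQ_def 1 I1_R1[OF Q] using Q by (simp add: field_simps)
    then have "dQ relu relu' \<eta> \<zeta> Q R L = 0 \<longleftrightarrow> (1 - Q) / 2 - \<zeta> * Q = 0" using eta by simp
    also have "\<dots> \<longleftrightarrow> Q = 1 / (2 * \<zeta> + 1)" using zeta by (auto simp: field_simps)
    finally show ?thesis unfolding is_fixed_point_def dL_def using dR0 1 by simp
  next
    case 2
    have "dQ relu relu' \<eta> \<zeta> Q R L = - (\<eta> * Q * (1/2 + \<zeta>))"
      unfolding dQ_def 2 I1_Rm1[OF Q] using Q by (simp add: field_simps power2_eq_square)
    moreover have "\<eta> * Q * (1/2 + \<zeta>) > 0" using eta Q zeta by simp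
    ultimately have "dQ relu relu' \<eta> \<zeta> Q R L \<noteq> 0" by linarith
    then show ?thesis unfolding is_fixed_point_def using 2 by simp
  next
    case 3
    have "dR relu relu' \<eta> \<zeta> Q R L = \<eta> / L\<^sup>2 * (Q * I3 relu relu' Q R - R * I1 relu relu' Q R)"
      unfolding dR_def using L by (simp add: field_simps)
    moreover have "\<eta> / L\<^sup>2 * (Q * I3 relu relu' Q R - R * I1 relu relu' Q R) > 0"
      using main_pos[of R Q] 3 Q eta L by simp
    ultimately have "dR relu relu' \<eta> \<zeta> Q R L \<noteq> 0" by linarith
    then show ?thesis unfolding is_fixed_point_def using 3 by simp
  qed
qed

end
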